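(* Let $d\ge1$ and for $k=1,2$ let $(\boldsymbol X_k,Y_k)=(X_{k,1},\ldots,X_{k,d},Y_k)$ be a random vector with continuous marginals and $(d+1)$-dimensional copula $C_k$. Fix $\boldsymbol{\alpha}\in[0,1)^d$ with $C_k(\boldsymbol\alpha,1)<1$, and set $l_{\boldsymbol\alpha}(v)=\dfrac{v-C_1(\boldsymbol\alpha,v)}{v-C_2(\boldsymbol\alpha,v)}$. Suppose at least one of $C_1,C_2$ is $\mathrm{LTD}^1_{d+1}$. If $Y_1\le_{\rm disp}Y_2$ and $l_{\boldsymbol\alpha}(v)\ge l_{\boldsymbol\alpha}(1)$ for all $v\in(0,1]$, then $$\Delta\mathrm{VCoES}_{\boldsymbol\alpha,\beta}(Y_1|\boldsymbol X_1)\le\Delta\mathrm{VCoES}_{\boldsymbol\alpha,\beta}(Y_2|\boldsymbol X_2)\quad\text{for all }\beta\in(0,1).$$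
   Context: $C(\boldsymbol{\alpha},v)=C(\alpha_1,\ldots,\alpha_d,v)$. $F^{-1}(t)=\inf\{x:F(x)\ge t\}$, $\mathrm{VaR}_t(Z)=F_Z^{-1}(t)$, $\mathrm{ES}_\beta(Z)=\frac1{1-\beta}\int_\beta^1\mathrm{VaR}_t(Z)\,dt$. $\mathrm{VCoVaR}_{\boldsymbol\alpha,t}(Y_k|\boldsymbol X_k)$ is the $t$-quantile of the conditional distribution of $Y_k$ given $\{\exists\, i: X_{k,i}>\mathrm{VaR}_{\alpha_i}(X_{k,i})\}$; $\mathrm{VCoES}_{\boldsymbol\alpha,\beta}(Y|\boldsymbol X)=\frac1{1-\beta}\int_\beta^1\mathrm{VCoVaR}_{\boldsymbol\alpha,t}(Y|\boldsymbol X)\,dt$ and $\Delta\mathrm{VCoES}_{\boldsymbol\alpha,\beta}(Y|\boldsymbol X)=\mathrm{VCoES}_{\boldsymbol\alpha,\beta}(Y|\boldsymbol X)-\mathrm{ES}_\beta(Y)$. A $(d+1)$-dimensional copula $C$ is $\mathrm{LTD}^1_{d+1}$ if $C(u_1,\ldots,u_d,v)/v$ is nonincreasing in $v\in(0,1]$ for all $u_1,\ldots,u_d$. $Y_1\le_{\rm disp}Y_2$ if $F_{Y_1}^{-1}(v)-F_{Y_1}^{-1}(u)\le F_{Y_2}^{-1}(v)-F_{Y_2}^{-1}(u)$ for all $0<u\le v<1$. *)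

theory Defs
  imports "HOL-Probability.Probability"
begin

definition dfun :: "'a measure \<Rightarrow> ('a \<Rightarrow> real) \<Rightarrow> real \<Rightarrow> real" where
  "dfun M Z x = measure M {\<omega> \<in> space M. Z \<omega> \<le> x}"

text \<open>Generalised inverse F^{-1}(t) = inf {x. F x \<ge> t}, valued in the extended reals
  (it is -\<infinity> for t \<le> 0 when F is a distribution function).\<close>
definition gen_inv :: "(real \<Rightarrow> real) \<Rightarrow> real \<Rightarrow> ereal" where
  "gen_inv F t = Inf (ereal ` {x. t \<le> F x})"

text \<open>VaR_t(Z) = F_Z^{-1}(t) (finite for t in (0,1)).\<close>
definition VaR :: "'a measure \<Rightarrow> ('a \<Rightarrow> real) \<Rightarrow> real \<Rightarrow> real" where
  "VaR M Z t = real_of_ereal (gen_inv (dfun M Z) t)"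

definition ES :: "'a measure \<Rightarrow> ('a \<Rightarrow> real) \<Rightarrow> real \<Rightarrow> real" where
  "ES M Z \<beta> = 1 / (1 - \<beta>) * (LINT t:{\<beta><..<1}|lborel. VaR M Z t)"

text \<open>Stress event: some component X_i exceeds its VaR at level alpha_i
  (VaR_0 = -\<infinity>, so alpha_i = 0 gives the sure event).\<close>
definition stress_event :: "'a measure \<Rightarrow> ('a \<Rightarrow> real^'d) \<Rightarrow> real^'d \<Rightarrow> 'a set" where
  "stress_event M X \<alpha> =
     {\<omega> \<in> space M. \<exists>i. ereal (X \<omega> $ i) > gen_inv (dfun M (\<lambda>\<eta>. X \<eta> $ i)) (\<alpha> $ i)}"

definition cond_dfun :: "'a measure \<Rightarrow> ('a \<Rightarrow> real^'d) \<Rightarrow> ('a \<Rightarrow> real) \<Rightarrow> real^'d \<Rightarrow> real \<Rightarrow> real" where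
  "cond_dfun M X Y \<alpha> y =
     measure M ({\<omega> \<in> space M. Y \<omega> \<le> y} \<inter> stress_event M X \<alpha>) / measure M (stress_event M X \<alpha>)"

definition VCoVaR :: "'a measure \<Rightarrow> ('a \<Rightarrow> real^'d) \<Rightarrow> ('a \<Rightarrow> real) \<Rightarrow> real^'d \<Rightarrow> real \<Rightarrow> real" where
  "VCoVaR M X Y \<alpha> t = real_of_ereal (gen_inv (cond_dfun M X Y \<alpha>) t)"

definition VCoES :: "'a measure \<Rightarrow> ('a \<Rightarrow> real^'d) \<Rightarrow> ('a \<Rightarrow> real) \<Rightarrow> real^'d \<Rightarrow> real \<Rightarrow> real" where
  "VCoES M X Y \<alpha> \<beta> = 1 / (1 - \<beta>) * (LINT t:{\<beta><..<1}|lborel. VCoVaR M X Y \<alpha> t)"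

definition Delta_VCoES :: "'a measure \<Rightarrow> ('a \<Rightarrow> real^'d) \<Rightarrow> ('a \<Rightarrow> real) \<Rightarrow> real^'d \<Rightarrow> real \<Rightarrow> real" where
  "Delta_VCoES M X Y \<alpha> \<beta> = VCoES M X Y \<alpha> \<beta> - ES M Y \<beta>"

definition is_copula :: "(real^'d \<Rightarrow> real \<Rightarrow> real) \<Rightarrow> bool" where
  "is_copula C \<longleftrightarrow> (\<exists>N :: ((real^'d) \<times> real) measure.
      prob_space N \<and> sets N = sets borel \<and>
      (\<forall>i. \<forall>a\<in>{0..1}. measure N {p. fst p $ i \<le> a} = a) \<and>
      (\<forall>a\<in>{0..1}. measure N {p. snd p \<le> a} = a) \<and>
      (\<forall>u v. (\<forall>i. u $ i \<in> {0..1}) \<and> v \<in> {0..1} \<longrightarrow>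
         C u v = measure N {p. (\<forall>i. fst p $ i \<le> u $ i) \<and> snd p \<le> v}))"

definition is_copula_of :: "'a measure \<Rightarrow> ('a \<Rightarrow> real^'d) \<Rightarrow> ('a \<Rightarrow> real) \<Rightarrow> (real^'d \<Rightarrow> real \<Rightarrow> real) \<Rightarrow> bool" where
  "is_copula_of M X Y C \<longleftrightarrow> is_copula C \<and>
     (\<forall>x y. measure M {\<omega> \<in> space M. (\<forall>i. X \<omega> $ i \<le> x $ i) \<and> Y \<omega> \<le> y}
            = C (\<chi> i. dfun M (\<lambda>\<omega>. X \<omega> $ i) (x $ i)) (dfun M Y y))"

definition cont_marginals :: "'a measure \<Rightarrow> ('a \<Rightarrow> real^'d) \<Rightarrow> ('a \<Rightarrow> real) \<Rightarrow> bool" where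
  "cont_marginals M X Y \<longleftrightarrow>
     (\<forall>i. continuous_on UNIV (dfun M (\<lambda>\<omega>. X \<omega> $ i))) \<and> continuous_on UNIV (dfun M Y)"

definition LTD1 :: "(real^'d \<Rightarrow> real \<Rightarrow> real) \<Rightarrow> bool" where
  "LTD1 C \<longleftrightarrow> (\<forall>u. (\<forall>i. u $ i \<in> {0..1}) \<longrightarrow>
      (\<forall>v w. 0 < v \<and> v \<le> w \<and> w \<le> 1 \<longrightarrow> C u w / w \<le> C u v / v))"

definition disp_le :: "'a measure \<Rightarrow> ('a \<Rightarrow> real) \<Rightarrow> 'b measure \<Rightarrow> ('b \<Rightarrow> real) \<Rightarrow> bool" where
  "disp_le M1 Y1 M2 Y2 \<longleftrightarrow> (\<forall>u v. 0 < u \<and> u \<le> v \<and> v < 1 \<longrightarrow>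
      VaR M1 Y1 v - VaR M1 Y1 u \<le> VaR M2 Y2 v - VaR M2 Y2 u)"

end

theory Submission imports Defs begin

lemma dfun_cdf:
  assumes "prob_space M" "Y \<in> borel_measurable M"
  shows "dfun M Y = cdf (distr M borel Y)"
proof
  fix x
  interpret prob_space M by fact
  have "cdf (distr M borel Y) x = measure (distr M borel Y) {..x}" by (simp add: cdf_def)
  also have "\<dots> = measure M (Y -` {..x} \<inter> space M)"
    using assms(2) by (intro measure_distr) auto
  also have "Y -` {..x} \<inter> space M = {\<omega> \<in> space M. Y \<omega> \<le> x}" by auto
  finally show "dfun M Y x = cdf (distr M borel Y) x" unfolding dfun_def by simp
qed

lemma VaR_char:
  assumes "prob_space M" "Y \<in> borel_measurable M" "0 < t" "t < 1"
  shows "VaR M Y t = Inf {x. t \<le> dfun M Y x}"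
    and "\<And>x. t \<le> dfun M Y x \<longleftrightarrow> VaR M Y t \<le> x"
    and "gen_inv (dfun M Y) t = ereal (VaR M Y t)"
proof -
  interpret prob_space M by fact
  interpret D: cdf_distribution "distr M borel Y"
    unfolding cdf_distribution_def using assms(2) by simp
  have F: "dfun M Y = D.C" using dfun_cdf[OF assms(1,2)] .
  have ps: "t \<le> D.C x \<longleftrightarrow> D.I t \<le> x" for x
    by (rule D.pseudoinverse[OF assms(3,4)])
  have ne: "{x. t \<le> D.C x} \<noteq> {}" using ps[of "D.I t"] by blast
  have bdd: "bdd_below {x. t \<le> D.C x}"
    using ps by (intro bdd_belowI[of _ "D.I t"]) blast
  have G: "gen_inv (dfun M Y) t = ereal (D.I t)"
    unfolding gen_inv_def F using ereal_Inf'[OF bdd ne] by (simp add: image_image)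
  then have V: "VaR M Y t = D.I t" unfolding VaR_def by (simp only: real_of_ereal.simps)
  show "gen_inv (dfun M Y) t = ereal (VaR M Y t)" using G V by (simp only:)
  show "VaR M Y t = Inf {x. t \<le> dfun M Y x}" using F V by (simp only:)
  show "\<And>x. t \<le> dfun M Y x \<longleftrightarrow> VaR M Y t \<le> x" unfolding F V by (rule ps)
qed

lemma VaR_integrable:
  assumes "prob_space M" "Y \<in> borel_measurable M" "integrable M Y"
  shows "set_integrable lborel {0<..<1} (VaR M Y)"
proof -
  interpret prob_space M by fact
  interpret D: cdf_distribution "distr M borel Y"
    unfolding cdf_distribution_def using assms(2) by simp
  let ?O = "restrict_space lborel {0<..<1::real}"
  have mI: "D.I \<in> measurable ?O borel"
    using D.measurable_CI by (simp add: measurable_cong_sets sets_restrict_space)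
  have "integrable (distr M borel Y) (\<lambda>x. x)"
    using assms(2,3) by (subst integrable_distr_eq) auto
  then have "integrable (distr ?O borel D.I) (\<lambda>x. x)" using D.distr_I_eq_M by simp
  then have "integrable ?O D.I" using mI by (subst (asm) integrable_distr_eq) auto
  moreover have "\<And>t. t \<in> space ?O \<Longrightarrow> D.I t = VaR M Y t"
    using VaR_char(1)[OF assms(1,2)] dfun_cdf[OF assms(1,2)] by (auto simp: space_restrict_space)
  ultimately have "integrable ?O (VaR M Y)" using Bochner_Integration.integrable_cong[of ?O ?O "D.I" "VaR M Y"] by simp
  moreover have s: "{0<..<1::real} \<inter> space lborel \<in> sets lborel" by simp
  ultimately show ?thesis unfolding set_integrable_def using integrable_restrict_space[OF s] by blast
qed

lemma copula_props:
  fixes C :: "real^'d \<Rightarrow> real \<Rightarrow> real"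
  assumes "is_copula C" "\<forall>i. u $ i \<in> {0..1}"
  shows copula_mono: "\<And>v w. 0 \<le> v \<Longrightarrow> v \<le> w \<Longrightarrow> w \<le> 1 \<Longrightarrow> C u v \<le> C u w \<and> C u w - C u v \<le> w - v"
    and copula_zero: "C u 0 = 0"
    and copula_zero': "(\<exists>i. u $ i = 0) \<Longrightarrow> v \<in> {0..1} \<Longrightarrow> C u v = 0"
proof -
  obtain N :: "((real^'d) \<times> real) measure" where N: "prob_space N" "sets N = sets borel"
     "\<forall>i. \<forall>a\<in>{0..1}. measure N {p. fst p $ i \<le> a} = a"
     "\<forall>a\<in>{0..1}. measure N {p. snd p \<le> a} = a"
     "\<forall>u v. (\<forall>i. u $ i \<in> {0..1}) \<and> v \<in> {0..1} \<longrightarrow>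
         C u v = measure N {p. (\<forall>i. fst p $ i \<le> u $ i) \<and> snd p \<le> v}"
    using assms(1) unfolding is_copula_def by blast
  interpret N: prob_space N by (rule N(1))
  define A where "A v = {p::(real^'d) \<times> real. (\<forall>i. fst p $ i \<le> u $ i) \<and> snd p \<le> v}" for v
  define S where "S v = {p::(real^'d) \<times> real. snd p \<le> v}" for v
  have clA: "closed (A v)" for v unfolding A_def
    by (intro closed_Collect_conj closed_Collect_all closed_Collect_le continuous_intros)
  have clS: "closed (S v)" for v unfolding S_def
    by (intro closed_Collect_le continuous_intros)
  have sA: "A v \<in> sets N" for v using clA N(2) by (simp add: borel_closed)
  have sS: "S v \<in> sets N" for v using clS N(2) by (simp add: borel_closed)
  have CA: "v \<in> {0..1} \<Longrightarrow> C u v = measure N (A v)" for v using N(5) assms(2) A_def by auto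
  have mS: "v \<in> {0..1} \<Longrightarrow> measure N (S v) = v" for v using N(4) S_def by auto
  show mono: "C u v \<le> C u w \<and> C u w - C u v \<le> w - v" if "0 \<le> v" "v \<le> w" "w \<le> 1" for v w
  proof
    have sub: "A v \<subseteq> A w" using that by (auto simp: A_def)
    show "C u v \<le> C u w" using CA that sub sA by (auto intro!: N.finite_measure_mono)
    have "C u w - C u v = measure N (A w - A v)"
      using CA that sub sA by (simp add: N.finite_measure_Diff)
    also have "\<dots> \<le> measure N (S w - S v)"
      using sA sS by (intro N.finite_measure_mono) (auto simp: A_def S_def)
    also have "\<dots> = w - v" using mS that sS by (simp add: N.finite_measure_Diff S_def subset_eq)
    finally show "C u w - C u v \<le> w - v" .
  qed
  show z: "C u 0 = 0"
  proof -
    have "C u 0 \<le> measure N (S 0)" using CA[of 0] sS by (auto intro!: N.finite_measure_mono simp: A_def S_def)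
    then show ?thesis using mS[of 0] CA[of 0] measure_nonneg[of N "A 0"] by auto
  qed
  show "C u v = 0" if ex: "\<exists>i. u $ i = 0" and v01: "v \<in> {0..1}"
  proof -
    obtain i where i: "u $ i = 0" using ex by auto
    have sT: "{p::(real^'d) \<times> real. fst p $ i \<le> 0} \<in> sets N" 
      using N(2) by (simp add: borel_closed closed_Collect_le continuous_intros)
    have "A v \<subseteq> {p. fst p $ i \<le> 0}" using i by (auto simp: A_def) (metis)
    then have "C u v \<le> measure N {p. fst p $ i \<le> 0}" using CA[OF v01] sT
      by (simp add: N.finite_measure_mono)
    also have "\<dots> = 0" using N(3) by auto
    finally show ?thesis using CA[OF v01] measure_nonneg[of N "A v"] by auto
  qed
qed

lemma integrable_uniform:
  fixes Y :: "'a \<Rightarrow> real"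
  assumes "prob_space M" "E \<in> sets M" "measure M E > 0" "integrable M Y"
  shows "integrable (uniform_measure M E) Y"
proof -
  interpret prob_space M by fact
  have Ym[measurable]: "Y \<in> borel_measurable M" using assms(4) by auto
  have "(\<integral>\<^sup>+x. ennreal (norm (Y x)) \<partial>uniform_measure M E)
      = (\<integral>\<^sup>+x. ennreal (norm (Y x)) * indicator E x \<partial>M) / emeasure M E"
    using assms(2) by (intro nn_integral_uniform_measure) auto
  also have "\<dots> \<le> (\<integral>\<^sup>+x. ennreal (norm (Y x)) \<partial>M) / emeasure M E"
    by (intro divide_right_mono_ennreal nn_integral_mono) (auto split: split_indicator)
  also have "\<dots> < \<infinity>"
  proof -
    have a: "(\<integral>\<^sup>+x. ennreal (norm (Y x)) \<partial>M) < \<top>" using assms(4) unfolding integrable_iff_bounded by simp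
    have b: "emeasure M E \<noteq> 0" using assms(3) by (simp add: emeasure_eq_measure)
    have a': "(\<integral>\<^sup>+x. ennreal (norm (Y x)) \<partial>M) \<noteq> \<top>" using a by (rule less_imp_neq)
    have "\<not> ((\<integral>\<^sup>+x. ennreal (norm (Y x)) \<partial>M) / emeasure M E = \<top>)"
      unfolding ennreal_divide_eq_top_iff using a' b by blast
    then show ?thesis unfolding infinity_ennreal_def by (rule top.not_eq_extremum[THEN iffD1])
  qed
  finally have fin: "(\<integral>\<^sup>+x. ennreal (norm (Y x)) \<partial>uniform_measure M E) < \<infinity>" .
  have "Y \<in> borel_measurable (uniform_measure M E)"
    using Ym measurable_cong_sets[of "uniform_measure M E" M borel borel] by simp
  then show ?thesis using fin by (rule integrableI_bounded)
qed

lemma dfun_bounds: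
  assumes "prob_space M"
  shows "0 \<le> dfun M Y y" "dfun M Y y \<le> 1"
  using assms by (auto simp: dfun_def prob_space.prob_le_1)

lemma dfun_top:
  assumes "prob_space M" "Y \<in> borel_measurable M" "e > 0"
  shows "\<exists>y. 1 - dfun M Y y < e"
proof -
  interpret prob_space M by fact
  interpret D: real_distribution "distr M borel Y" using assms(2) by simp
  have "(dfun M Y \<longlongrightarrow> 1) at_top" using dfun_cdf[OF assms(1,2)] D.cdf_lim_at_top_prob by simp
  then have "eventually (\<lambda>y. dfun M Y y > 1 - e) at_top" using assms(3)
    by (intro order_tendstoD(1)) auto
  then obtain y where "dfun M Y y > 1 - e" by (auto simp: eventually_at_top_linorder)
  then have "1 - dfun M Y y < e" by linarith
  then show ?thesis by blast
qed

lemma sys_cond: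
  fixes M :: "'a measure" and X :: "'a \<Rightarrow> real^'d" and Y :: "'a \<Rightarrow> real"
    and C :: "real^'d \<Rightarrow> real \<Rightarrow> real" and \<alpha> :: "real^'d"
  assumes PS: "prob_space M" and Xm: "X \<in> borel_measurable M" and Ym: "Y \<in> borel_measurable M"
    and cm: "cont_marginals M X Y" and cop: "is_copula_of M X Y C"
    and al: "\<forall>i. \<alpha> $ i \<in> {0..<1}" and C1: "C \<alpha> 1 < 1"
  shows "stress_event M X \<alpha> \<in> sets M"
    and "measure M (stress_event M X \<alpha>) = 1 - C \<alpha> 1"
    and "\<And>y. cond_dfun M X Y \<alpha> y = (dfun M Y y - C \<alpha> (dfun M Y y)) / (1 - C \<alpha> 1)"
proof -
  interpret prob_space M by fact
  have isC: "is_copula C" using cop by (simp add: is_copula_of_def)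
  have al01: "\<forall>i. \<alpha> $ i \<in> {0..1}" using al by (meson atLeastAtMost_iff atLeastLessThan_iff less_imp_le)
  have Xi[measurable]: "(\<lambda>\<omega>. X \<omega> $ i) \<in> borel_measurable M" for i
    by (rule measurable_compose[OF Xm]) (intro borel_measurable_continuous_onI continuous_intros)
  note Ym[measurable]
  define E where "E = stress_event M X \<alpha>"
  define F where "F = dfun M Y"
  have F01: "F y \<in> {0..1}" for y using dfun_bounds[OF PS] F_def by auto
  have "E \<in> sets M \<and> measure M E = 1 - C \<alpha> 1 \<and>
     (\<forall>y. measure M ({\<omega> \<in> space M. Y \<omega> \<le> y} \<inter> E) = F y - C \<alpha> (F y))"
  proof (cases "\<exists>i. \<alpha> $ i = 0")
    case True
    then obtain i where i: "\<alpha> $ i = 0" by auto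
    have "gen_inv (dfun M (\<lambda>\<eta>. X \<eta> $ i)) (\<alpha> $ i) = -\<infinity>"
      unfolding gen_inv_def i
    proof (rule ereal_bot)
      fix B
      show "Inf (ereal ` {x. 0 \<le> dfun M (\<lambda>\<eta>. X \<eta> $ i) x}) \<le> ereal B"
        using dfun_bounds(1)[OF PS] by (intro Inf_lower) auto
    qed
    then have "E = space M" unfolding E_def stress_event_def by (auto intro!: exI[of _ i])
    moreover have "C \<alpha> v = 0" if "v \<in> {0..1}" for v using copula_zero'[OF isC al01] True that by auto
    ultimately show ?thesis using F01 by (simp add: F_def dfun_def prob_space Int_absorb2)
  next
    case False
    then have alp: "0 < \<alpha> $ i" "\<alpha> $ i < 1" for i using al by (auto simp: order_le_less)
    define m where "m i = VaR M (\<lambda>\<eta>. X \<eta> $ i) (\<alpha> $ i)" for i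
    have mchar: "\<alpha> $ i \<le> dfun M (\<lambda>\<eta>. X \<eta> $ i) x \<longleftrightarrow> m i \<le> x" for i x
      using VaR_char(2)[OF PS Xi alp] m_def by auto
    have mgen: "gen_inv (dfun M (\<lambda>\<eta>. X \<eta> $ i)) (\<alpha> $ i) = ereal (m i)" for i
      using VaR_char(3)[OF PS Xi alp] m_def by auto
    have Fm: "dfun M (\<lambda>\<eta>. X \<eta> $ i) (m i) = \<alpha> $ i" for i
    proof (rule antisym)
      show "\<alpha> $ i \<le> dfun M (\<lambda>\<eta>. X \<eta> $ i) (m i)" using mchar by auto
      have "continuous_on UNIV (dfun M (\<lambda>\<omega>. X \<omega> $ i))" using cm by (simp add: cont_marginals_def)
      then have "(dfun M (\<lambda>\<omega>. X \<omega> $ i) \<longlongrightarrow> dfun M (\<lambda>\<omega>. X \<omega> $ i) (m i)) (at_left (m i))"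
        by (simp add: continuous_on_eq_continuous_at isCont_def filterlim_at_split)
      moreover have "eventually (\<lambda>x. dfun M (\<lambda>\<omega>. X \<omega> $ i) x \<le> \<alpha> $ i) (at_left (m i))"
      proof (rule eventually_mono[OF eventually_at_left_real[of "m i - 1" "m i"]])
        fix x assume "x \<in> {m i - 1<..<m i}"
        then show "dfun M (\<lambda>\<omega>. X \<omega> $ i) x \<le> \<alpha> $ i" using mchar[of i x] by auto
      qed simp
      ultimately show "dfun M (\<lambda>\<eta>. X \<eta> $ i) (m i) \<le> \<alpha> $ i"
        by (intro tendsto_upperbound) (auto simp: trivial_limit_at_left_real)
    qed
    have Edef: "E = {\<omega> \<in> space M. \<exists>i. m i < X \<omega> $ i}"
      unfolding E_def stress_event_def mgen by simp
    define K where "K = {\<omega> \<in> space M. \<forall>i. X \<omega> $ i \<le> m i}"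
    have Es: "E \<in> sets M" unfolding Edef by measurable
    have Ks: "K \<in> sets M" unfolding K_def by measurable
    have EK: "E = space M - K" unfolding Edef K_def by (auto simp: not_le) (meson not_le)
    have xm: "(\<chi> i. dfun M (\<lambda>\<omega>. X \<omega> $ i) ((\<chi> i. m i) $ i)) = \<alpha>"
      by (simp add: vec_eq_iff Fm)
    have KY: "measure M (K \<inter> {\<omega> \<in> space M. Y \<omega> \<le> y}) = C \<alpha> (F y)" for y
    proof -
      have "K \<inter> {\<omega> \<in> space M. Y \<omega> \<le> y} = {\<omega> \<in> space M. (\<forall>i. X \<omega> $ i \<le> (\<chi> i. m i) $ i) \<and> Y \<omega> \<le> y}"
        unfolding K_def by auto
      moreover have "\<forall>x y. measure M {\<omega> \<in> space M. (\<forall>i. X \<omega> $ i \<le> x $ i) \<and> Y \<omega> \<le> y}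
            = C (\<chi> i. dfun M (\<lambda>\<omega>. X \<omega> $ i) (x $ i)) (dfun M Y y)"
        using cop unfolding is_copula_of_def by blast
      then have "measure M {\<omega> \<in> space M. (\<forall>i. X \<omega> $ i \<le> (\<chi> i. m i) $ i) \<and> Y \<omega> \<le> y}
            = C (\<chi> i. dfun M (\<lambda>\<omega>. X \<omega> $ i) ((\<chi> i. m i) $ i)) (dfun M Y y)"
        by (rule spec2)
      ultimately show ?thesis using xm F_def by simp
    qed
    have Ysets: "{\<omega> \<in> space M. Y \<omega> \<le> y} \<in> sets M" for y by measurable
    have part1: "measure M ({\<omega> \<in> space M. Y \<omega> \<le> y} \<inter> E) = F y - C \<alpha> (F y)" for y
    proof -
      have "{\<omega> \<in> space M. Y \<omega> \<le> y} \<inter> E = {\<omega> \<in> space M. Y \<omega> \<le> y} - (K \<inter> {\<omega> \<in> space M. Y \<omega> \<le> y})"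
        using EK by auto
      then show ?thesis using KY Ysets Ks
        by (simp add: finite_measure_Diff F_def dfun_def sets.Int)
    qed
    have PK: "measure M K = C \<alpha> 1"
    proof (rule ccontr)
      assume ne: "measure M K \<noteq> C \<alpha> 1"
      obtain y where y: "1 - F y < \<bar>measure M K - C \<alpha> 1\<bar>"
        using dfun_top[OF PS Ym, of "\<bar>measure M K - C \<alpha> 1\<bar>"] ne F_def by auto
      have a: "measure M K - C \<alpha> (F y) \<ge> 0" "measure M K - C \<alpha> (F y) \<le> 1 - F y"
      proof -
        have "measure M K - C \<alpha> (F y) = measure M (K - {\<omega> \<in> space M. Y \<omega> \<le> y})"
          using KY[of y] Ks Ysets by (simp add: finite_measure_Diff' )
        also have "\<dots> \<le> measure M (space M - {\<omega> \<in> space M. Y \<omega> \<le> y})"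
          using Ks Ysets sets.sets_into_space[OF Ks] by (intro finite_measure_mono) auto
        also have "\<dots> = 1 - F y" using Ysets by (simp add: prob_compl F_def dfun_def)
        finally show "measure M K - C \<alpha> (F y) \<le> 1 - F y" .
        show "measure M K - C \<alpha> (F y) \<ge> 0" using KY[of y] Ks Ysets
          by (metis diff_ge_0_iff_ge finite_measure_mono inf_le1)
      qed
      have b: "C \<alpha> 1 - C \<alpha> (F y) \<ge> 0" "C \<alpha> 1 - C \<alpha> (F y) \<le> 1 - F y"
        using copula_mono[OF isC al01, of "F y" 1] F01[of y] by auto
      show False using a b y by linarith
    qed
    have "measure M E = 1 - C \<alpha> 1" using EK Ks PK by (simp add: prob_compl)
    then show ?thesis using Es part1 by auto
  qed
  then show "stress_event M X \<alpha> \<in> sets M" "measure M (stress_event M X \<alpha>) = 1 - C \<alpha> 1"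
    "\<And>y. cond_dfun M X Y \<alpha> y = (dfun M Y y - C \<alpha> (dfun M Y y)) / (1 - C \<alpha> 1)"
    unfolding cond_dfun_def E_def F_def by auto
qed

lemma VaR_mono:
  assumes "prob_space M" "Y \<in> borel_measurable M" "0 < a" "a \<le> b" "b < 1"
  shows "VaR M Y a \<le> VaR M Y b"
proof -
  have "b \<le> dfun M Y (VaR M Y b)" using VaR_char(2)[OF assms(1,2), of b "VaR M Y b"] assms by auto
  then have "a \<le> dfun M Y (VaR M Y b)" using assms(4) by linarith
  then show ?thesis using VaR_char(2)[OF assms(1,2), of a "VaR M Y b"] assms by auto
qed

lemma sys_VCo_int:
  fixes M :: "'a measure" and X :: "'a \<Rightarrow> real^'d" and Y :: "'a \<Rightarrow> real"
    and C :: "real^'d \<Rightarrow> real \<Rightarrow> real" and \<alpha> :: "real^'d"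
  assumes PS: "prob_space M" and Xm: "X \<in> borel_measurable M" and Ym: "Y \<in> borel_measurable M"
    and Yi: "integrable M Y"
    and cm: "cont_marginals M X Y" and cop: "is_copula_of M X Y C"
    and al: "\<forall>i. \<alpha> $ i \<in> {0..<1}" and C1: "C \<alpha> 1 < 1"
  shows "set_integrable lborel {0<..<1} (VCoVaR M X Y \<alpha>)"
proof -
  interpret prob_space M by fact
  define E where "E = stress_event M X \<alpha>"
  have Es: "E \<in> sets M" using sys_cond(1)[OF assms(1-3,5-8)] E_def by simp
  have PE: "measure M E > 0" using sys_cond(2)[OF assms(1-3,5-8)] E_def C1 by simp
  have e0: "emeasure M E \<noteq> 0" using PE by (simp add: emeasure_eq_measure)
  have e1: "emeasure M E \<noteq> \<infinity>" by simp
  define M' where "M' = uniform_measure M E"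
  have PS': "prob_space M'" unfolding M'_def by (rule prob_space_uniform_measure[OF e0 e1])
  have Ym': "Y \<in> borel_measurable M'"
    using Ym measurable_cong_sets[of M' M borel borel] by (simp add: M'_def)
  have Yi': "integrable M' Y" unfolding M'_def by (rule integrable_uniform[OF PS Es PE Yi])
  have Ysets: "{\<omega> \<in> space M. Y \<omega> \<le> y} \<in> sets M" for y using Ym by measurable
  have "cond_dfun M X Y \<alpha> y = dfun M' Y y" for y
    unfolding cond_dfun_def dfun_def M'_def E_def[symmetric] space_uniform_measure
    using measure_uniform_measure[OF e0 e1 Ysets[of y]] by (simp add: Int_commute)
  then have "cond_dfun M X Y \<alpha> = dfun M' Y" by (rule ext)
  then have "VCoVaR M X Y \<alpha> = VaR M' Y"
    unfolding VCoVaR_def VaR_def by (simp only:)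
  then show ?thesis using VaR_integrable[OF PS' Ym' Yi'] by simp
qed

lemma sys_s:
  fixes M :: "'a measure" and X :: "'a \<Rightarrow> real^'d" and Y :: "'a \<Rightarrow> real"
    and C :: "real^'d \<Rightarrow> real \<Rightarrow> real" and \<alpha> :: "real^'d"
  assumes PS: "prob_space M" and Xm: "X \<in> borel_measurable M" and Ym: "Y \<in> borel_measurable M"
    and cm: "cont_marginals M X Y" and cop: "is_copula_of M X Y C"
    and al: "\<forall>i. \<alpha> $ i \<in> {0..<1}" and C1: "C \<alpha> 1 < 1"
    and t: "0 < t" "t < 1"
  shows "\<exists>s. 0 < s \<and> s < 1 \<and> t \<le> (s - C \<alpha> s) / (1 - C \<alpha> 1) \<and>
     (\<forall>v\<in>{0..1}. t \<le> (v - C \<alpha> v) / (1 - C \<alpha> 1) \<longrightarrow> s \<le> v) \<and>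
     VCoVaR M X Y \<alpha> t = VaR M Y s"
proof -
  have isC: "is_copula C" using cop by (simp add: is_copula_of_def)
  have al01: "\<forall>i. \<alpha> $ i \<in> {0..1}" using al by (meson atLeastAtMost_iff atLeastLessThan_iff less_imp_le)
  define p where "p = 1 - C \<alpha> 1"
  have p0: "p > 0" using C1 p_def by simp
  define G where "G v = (v - C \<alpha> v) / p" for v
  have Gmono: "G v \<le> G w" if "0 \<le> v" "v \<le> w" "w \<le> 1" for v w
  proof -
    have "C \<alpha> w - C \<alpha> v \<le> w - v" using copula_mono[OF isC al01 that] by simp
    then have "v - C \<alpha> v \<le> w - C \<alpha> w" by simp
    then show ?thesis unfolding G_def using p0 by (simp add: divide_right_mono)
  qed
  have G0: "G 0 = 0" unfolding G_def using copula_zero[OF isC al01] by simp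
  have G1: "G 1 = 1" unfolding G_def p_def using p0 p_def by simp
  have lip: "1-lipschitz_on {0..1} (C \<alpha>)"
  proof (rule lipschitz_onI)
    fix x y :: real assume xy: "x \<in> {0..1}" "y \<in> {0..1}"
    show "dist (C \<alpha> x) (C \<alpha> y) \<le> 1 * dist x y"
    proof (cases "x \<le> y")
      case True
      then show ?thesis using copula_mono[OF isC al01, of x y] xy by (simp add: dist_real_def abs_if)
    next
      case False
      then show ?thesis using copula_mono[OF isC al01, of y x] xy by (simp add: dist_real_def abs_if)
    qed
  qed simp
  have Ccont: "continuous_on {0..1} (C \<alpha>)" by (rule lipschitz_on_continuous_on[OF lip])
  have Gcont: "continuous_on {0..1} G" unfolding G_def
    by (intro continuous_intros Ccont) (use p0 in auto)
  obtain x0 where x0: "0 \<le> x0" "x0 \<le> 1" "G x0 = t"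
    using IVT'[of G 0 t 1, OF _ _ _ Gcont] G0 G1 t by auto
  define T where "T = {0..1} \<inter> G -` {t..}"
  have Tcl: "closed T" unfolding T_def by (rule continuous_closed_preimage[OF Gcont]) auto
  have Tne: "T \<noteq> {}" using x0 T_def by auto
  have Tbdd: "bdd_below T" unfolding T_def by (rule bdd_belowI[of _ 0]) auto
  define s where "s = Inf T"
  have sT: "s \<in> T" unfolding s_def by (rule closed_contains_Inf[OF Tne Tbdd Tcl])
  have smin: "s \<le> v" if "v \<in> {0..1}" "t \<le> G v" for v
    unfolding s_def using that T_def Tbdd by (intro cInf_lower) auto
  have sx0: "s \<le> x0" using smin x0 by auto
  have x01: "x0 < 1" using x0 G1 t by (cases "x0 = 1") auto
  have s0: "0 < s"
  proof (rule ccontr)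
    assume "\<not> 0 < s"
    then have "s = 0" using sT T_def by auto
    then show False using sT T_def G0 t by auto
  qed
  have Gs: "t \<le> G s" using sT T_def by auto
  have s01: "s \<in> {0..1}" using sT T_def by auto
  have cd: "cond_dfun M X Y \<alpha> = (\<lambda>y. G (dfun M Y y))"
    using sys_cond(3)[OF assms(1-7)] by (simp add: fun_eq_iff G_def p_def)
  have seteq: "{y. t \<le> cond_dfun M X Y \<alpha> y} = {y. s \<le> dfun M Y y}"
  proof (intro Collect_cong iffI)
    fix y
    have Fy: "dfun M Y y \<in> {0..1}" using dfun_bounds[OF PS] by auto
    show "s \<le> dfun M Y y" if "t \<le> cond_dfun M X Y \<alpha> y" using that cd smin Fy by auto
    show "t \<le> cond_dfun M X Y \<alpha> y" if "s \<le> dfun M Y y"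
      using that cd Gmono[of s "dfun M Y y"] Fy s01 Gs by auto
  qed
  have "VCoVaR M X Y \<alpha> t = VaR M Y s"
    unfolding VCoVaR_def VaR_def gen_inv_def seteq ..
  then show ?thesis using s0 sx0 x01 Gs smin unfolding G_def p_def by (intro exI[of _ s]) auto
qed

lemma LTD_ge:
  fixes C :: "real^'d \<Rightarrow> real \<Rightarrow> real"
  assumes "LTD1 C" "\<forall>i. \<alpha> $ i \<in> {0..1}" "C \<alpha> 1 < 1" "0 < s" "s \<le> 1"
    "t \<le> (s - C \<alpha> s) / (1 - C \<alpha> 1)"
  shows "t \<le> s"
proof -
  have "C \<alpha> 1 / 1 \<le> C \<alpha> s / s" using assms(1,2,4,5) unfolding LTD1_def by blast
  then have "s * C \<alpha> 1 \<le> C \<alpha> s" using assms(4) by (simp add: le_divide_eq mult.commute)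
  then have "s - C \<alpha> s \<le> s * (1 - C \<alpha> 1)" by (simp add: algebra_simps)
  then have "(s - C \<alpha> s) / (1 - C \<alpha> 1) \<le> s" using assms(3) by (simp add: divide_le_eq)
  then show ?thesis using assms(6) by linarith
qed

theorem theorem4p5:
  fixes M1 :: "'a measure" and M2 :: "'b measure"
    and X1 :: "'a \<Rightarrow> real^'d" and Y1 :: "'a \<Rightarrow> real"
    and X2 :: "'b \<Rightarrow> real^'d" and Y2 :: "'b \<Rightarrow> real"
    and C1 C2 :: "real^'d \<Rightarrow> real \<Rightarrow> real"
    and \<alpha> :: "real^'d"
  assumes "prob_space M1" and "prob_space M2"
    and "X1 \<in> borel_measurable M1" and "Y1 \<in> borel_measurable M1"
    and "X2 \<in> borel_measurable M2" and "Y2 \<in> borel_measurable M2"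
    and "integrable M1 Y1" and "integrable M2 Y2"
    and "cont_marginals M1 X1 Y1" and "cont_marginals M2 X2 Y2"
    and "is_copula_of M1 X1 Y1 C1" and "is_copula_of M2 X2 Y2 C2"
    and "\<forall>i. \<alpha> $ i \<in> {0..<1}"
    and "C1 \<alpha> 1 < 1" and "C2 \<alpha> 1 < 1"
    and "LTD1 C1 \<or> LTD1 C2"
    and "disp_le M1 Y1 M2 Y2"
    and "\<forall>v\<in>{0<..1}. (v - C1 \<alpha> v) / (v - C2 \<alpha> v) \<ge> (1 - C1 \<alpha> 1) / (1 - C2 \<alpha> 1)"
  shows "\<forall>\<beta>\<in>{0<..<1}. Delta_VCoES M1 X1 Y1 \<alpha> \<beta> \<le> Delta_VCoES M2 X2 Y2 \<alpha> \<beta>"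
proof
  fix \<beta> :: real assume b: "\<beta> \<in> {0<..<1}"
  have al01: "\<forall>i. \<alpha> $ i \<in> {0..1}" using assms(13) by (meson atLeastAtMost_iff atLeastLessThan_iff less_imp_le)
  define B where "B = {\<beta><..<1::real}"
  have Bs: "B \<in> sets lborel" by (simp add: B_def)
  have Bsub: "B \<subseteq> {0<..<1}" using b B_def by auto
  have f1: "set_integrable lborel B (VCoVaR M1 X1 Y1 \<alpha>)"
    by (rule set_integrable_subset[OF sys_VCo_int[OF assms(1,3,4,7,9,11,13,14)] Bs Bsub])
  have f2: "set_integrable lborel B (VCoVaR M2 X2 Y2 \<alpha>)"
    by (rule set_integrable_subset[OF sys_VCo_int[OF assms(2,5,6,8,10,12,13,15)] Bs Bsub])
  have g1: "set_integrable lborel B (VaR M1 Y1)"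
    by (rule set_integrable_subset[OF VaR_integrable[OF assms(1,4,7)] Bs Bsub])
  have g2: "set_integrable lborel B (VaR M2 Y2)"
    by (rule set_integrable_subset[OF VaR_integrable[OF assms(2,6,8)] Bs Bsub])
  have pw: "VCoVaR M1 X1 Y1 \<alpha> t - VaR M1 Y1 t \<le> VCoVaR M2 X2 Y2 \<alpha> t - VaR M2 Y2 t" if tB: "t \<in> B" for t
  proof -
    have t: "0 < t" "t < 1" using tB Bsub by auto
    obtain s1 where s1: "0 < s1" "s1 < 1" "t \<le> (s1 - C1 \<alpha> s1) / (1 - C1 \<alpha> 1)"
      "\<forall>v\<in>{0..1}. t \<le> (v - C1 \<alpha> v) / (1 - C1 \<alpha> 1) \<longrightarrow> s1 \<le> v"
      "VCoVaR M1 X1 Y1 \<alpha> t = VaR M1 Y1 s1"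
      using sys_s[OF assms(1,3,4,9,11,13,14) t] by blast
    obtain s2 where s2: "0 < s2" "s2 < 1" "t \<le> (s2 - C2 \<alpha> s2) / (1 - C2 \<alpha> 1)"
      "\<forall>v\<in>{0..1}. t \<le> (v - C2 \<alpha> v) / (1 - C2 \<alpha> 1) \<longrightarrow> s2 \<le> v"
      "VCoVaR M2 X2 Y2 \<alpha> t = VaR M2 Y2 s2"
      using sys_s[OF assms(2,5,6,10,12,13,15) t] by blast
    define p1 where "p1 = 1 - C1 \<alpha> 1"
    define p2 where "p2 = 1 - C2 \<alpha> 1"
    define h1 where "h1 = s2 - C1 \<alpha> s2"
    define h2 where "h2 = s2 - C2 \<alpha> s2"
    have p1p: "p1 > 0" and p2p: "p2 > 0" using assms(14,15) p1_def p2_def by auto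
    have h2p: "h2 > 0"
    proof -
      have "t \<le> h2 / p2" using s2(3) h2_def p2_def by simp
      then have "0 < h2 / p2" using t by linarith
      then show ?thesis using p2p by (simp add: zero_less_divide_iff)
    qed
    have hyp: "p1 / p2 \<le> h1 / h2" using assms(18) s2(1,2) h1_def h2_def p1_def p2_def by auto
    have "p1 / p2 * h2 \<le> h1" using hyp h2p by (simp add: le_divide_eq)
    then have "h2 / p2 \<le> h1 / p1" using p1p p2p by (simp add: field_simps)
    then have "t \<le> (s2 - C1 \<alpha> s2) / (1 - C1 \<alpha> 1)"
      using s2(3) h1_def h2_def p1_def p2_def by simp
    then have s12: "s1 \<le> s2" using s1(4) s2(1,2) by auto
    have m2: "VaR M2 Y2 s1 \<le> VaR M2 Y2 s2" by (rule VaR_mono[OF assms(2,6) s1(1) s12 s2(2)])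
    show ?thesis
    proof (cases "t \<le> s1")
      case True
      have "VaR M1 Y1 s1 - VaR M1 Y1 t \<le> VaR M2 Y2 s1 - VaR M2 Y2 t"
        using assms(17) t True s1(2) unfolding disp_le_def by blast
      then show ?thesis using s1(5) s2(5) m2 by linarith
    next
      case False
      have "\<not> LTD1 C1"
        using LTD_ge[of C1 \<alpha> s1 t] al01 assms(14) s1(1,2,3) False by auto
      then have L2: "LTD1 C2" using assms(16) by auto
      have ts2: "t \<le> s2" using LTD_ge[OF L2 al01 assms(15) s2(1) _ s2(3)] s2(2) by simp
      have "VaR M1 Y1 s1 \<le> VaR M1 Y1 t" using VaR_mono[OF assms(1,4) s1(1) _ t(2)] False by simp
      moreover have "VaR M2 Y2 t \<le> VaR M2 Y2 s2" using VaR_mono[OF assms(2,6) t(1) ts2 s2(2)] .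
      ultimately show ?thesis using s1(5) s2(5) by linarith
    qed
  qed
  have "(LINT t:B|lborel. VCoVaR M1 X1 Y1 \<alpha> t - VaR M1 Y1 t)
      \<le> (LINT t:B|lborel. VCoVaR M2 X2 Y2 \<alpha> t - VaR M2 Y2 t)"
    by (rule set_integral_mono[OF set_integral_diff(1)[OF f1 g1] set_integral_diff(1)[OF f2 g2] pw])
  then have I: "(LINT t:B|lborel. VCoVaR M1 X1 Y1 \<alpha> t) - (LINT t:B|lborel. VaR M1 Y1 t)
      \<le> (LINT t:B|lborel. VCoVaR M2 X2 Y2 \<alpha> t) - (LINT t:B|lborel. VaR M2 Y2 t)"
    using set_integral_diff(2)[OF f1 g1] set_integral_diff(2)[OF f2 g2] by simp
  have c: "0 \<le> 1 / (1 - \<beta>)" using b by simp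
  have "1 / (1 - \<beta>) * ((LINT t:B|lborel. VCoVaR M1 X1 Y1 \<alpha> t) - (LINT t:B|lborel. VaR M1 Y1 t))
      \<le> 1 / (1 - \<beta>) * ((LINT t:B|lborel. VCoVaR M2 X2 Y2 \<alpha> t) - (LINT t:B|lborel. VaR M2 Y2 t))"
    by (rule mult_left_mono[OF I c])
  then show "Delta_VCoES M1 X1 Y1 \<alpha> \<beta> \<le> Delta_VCoES M2 X2 Y2 \<alpha> \<beta>"
    unfolding Delta_VCoES_def VCoES_def ES_def B_def by (simp add: right_diff_distrib)
qed
end
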